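(* Let $(X,\mathcal U)$ be a non-archimedean uniform space. For every $n\in\mathbb N$, the set $B_n$ of all elements of $A(X)$ of length at most $n$ is closed in $A_{NA}(X,\mathcal U)$.
   Context: A uniform space is non-archimedean if its (Hausdorff) uniformity has a base of equivalence relations. $A_{NA}(X,\mathcal U)$ is the free abelian non-archimedean group of $(X,\mathcal U)$: the abelian Hausdorff group with a local base at $0$ of open subgroups, realized on the free abelian group $A(X)$, such that every uniformly continuous map from $X$ into an abelian non-archimedean group extends uniquely to a continuous homomorphism. The length of a nonzero $w=\sum_{i=1}^n k_ix_i\in A(X)$ (distinct $x_i\in X$, $k_i\in\mathbb Z\setminus\{0\}$) is $\sum_i|k_i|$; the length of $0$ is $0$. *)

theory Defs
  imports "HOL-Analysis.Analysis" "HOL-Library.Poly_Mapping"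
begin

text \<open>The uniform space X is the whole type 'a; a uniformity is a set of entourages.\<close>

definition uniformity :: "('a \<times> 'a) set set \<Rightarrow> bool" where
  "uniformity \<U> \<longleftrightarrow> \<U> \<noteq> {}
     \<and> (\<forall>U\<in>\<U>. Id \<subseteq> U)
     \<and> (\<forall>U\<in>\<U>. \<forall>V. U \<subseteq> V \<longrightarrow> V \<in> \<U>)
     \<and> (\<forall>U\<in>\<U>. \<forall>V\<in>\<U>. U \<inter> V \<in> \<U>)
     \<and> (\<forall>U\<in>\<U>. U\<inverse> \<in> \<U>)
     \<and> (\<forall>U\<in>\<U>. \<exists>V\<in>\<U>. V O V \<subseteq> U)"

definition hausdorff_uniformity :: "('a \<times> 'a) set set \<Rightarrow> bool" where
  "hausdorff_uniformity \<U> \<longleftrightarrow> uniformity \<U> \<and> \<Inter>\<U> = Id"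

definition non_archimedean_uniformity :: "('a \<times> 'a) set set \<Rightarrow> bool" where
  "non_archimedean_uniformity \<U> \<longleftrightarrow> hausdorff_uniformity \<U>
     \<and> (\<forall>U\<in>\<U>. \<exists>E\<in>\<U>. equiv UNIV E \<and> E \<subseteq> U)"

text \<open>The free abelian group A(X) is realised as finitely supported maps (poly_mapping) to int; x is identified with single x 1.\<close>
abbreviation gen :: "'a \<Rightarrow> ('a \<Rightarrow>\<^sub>0 int)" where
  "gen x \<equiv> Poly_Mapping.single x 1"

definition word_length :: "('a \<Rightarrow>\<^sub>0 int) \<Rightarrow> nat" where
  "word_length w = (\<Sum>x\<in>Poly_Mapping.keys w. nat \<bar>Poly_Mapping.lookup w x\<bar>)"

definition is_subgroup :: "('a \<Rightarrow>\<^sub>0 int) set \<Rightarrow> bool" where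
  "is_subgroup H \<longleftrightarrow> 0 \<in> H \<and> (\<forall>a\<in>H. \<forall>b\<in>H. a - b \<in> H)"

text \<open>Topology of A_NA(X,U): the finest group topology on A(X) with a base at 0 of
  open subgroups such that x \<mapsto> gen x is uniformly continuous.\<close>
definition free_na_open :: "('a \<times> 'a) set set \<Rightarrow> ('a \<Rightarrow>\<^sub>0 int) set \<Rightarrow> bool" where
  "free_na_open \<U> W \<longleftrightarrow>
     (\<forall>w\<in>W. \<exists>H. is_subgroup H \<and> {(x, y). gen x - gen y \<in> H} \<in> \<U>
                 \<and> (\<lambda>h. w + h) ` H \<subseteq> W)"

definition A_NA_topology :: "('a \<times> 'a) set set \<Rightarrow> ('a \<Rightarrow>\<^sub>0 int) topology" where
  "A_NA_topology \<U> = topology (free_na_open \<U>)"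

end

theory Submission
  imports Defs
begin

definition csum :: "'a set \<Rightarrow> ('a \<Rightarrow>\<^sub>0 int) \<Rightarrow> int" where
  "csum C v = (\<Sum>x\<in>Poly_Mapping.keys v \<inter> C. Poly_Mapping.lookup v x)"

lemma csum_fin:
  assumes "finite K" "Poly_Mapping.keys v \<subseteq> K"
  shows "csum C v = (\<Sum>x\<in>K \<inter> C. Poly_Mapping.lookup v x)"
  unfolding csum_def
  by (rule sum.mono_neutral_left) (use assms in \<open>auto simp: in_keys_iff\<close>)

lemma csum_add: "csum C (a + b) = csum C a + csum C b"
proof -
  let ?K = "Poly_Mapping.keys a \<union> Poly_Mapping.keys b"
  have f: "finite ?K" by simp
  have "csum C (a + b) = (\<Sum>x\<in>?K \<inter> C. Poly_Mapping.lookup (a+b) x)"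
    using keys_add[of a b] by (intro csum_fin f) auto
  also have "\<dots> = (\<Sum>x\<in>?K \<inter> C. Poly_Mapping.lookup a x) + (\<Sum>x\<in>?K \<inter> C. Poly_Mapping.lookup b x)"
    by (simp add: lookup_add sum.distrib)
  also have "\<dots> = csum C a + csum C b"
    by (subst (1 2) csum_fin[OF f]) auto
  finally show ?thesis .
qed

lemma csum_zero: "csum C 0 = 0"
  by (simp add: csum_def)

lemma csum_uminus: "csum C (- a) = - csum C a"
  by (simp add: csum_def sum_negf)

lemma csum_minus: "csum C (a - b) = csum C a - csum C b"
  using csum_add[of C a "-b"] by (simp add: csum_uminus)

lemma csum_gen: "csum C (gen x) = (if x \<in> C then 1 else 0)"
  by (simp add: csum_def lookup_single)

lemma unif_ne: "uniformity \<U> \<Longrightarrow> \<U> \<noteq> {}"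
  by (simp add: uniformity_def)

lemma unif_up: "uniformity \<U> \<Longrightarrow> U \<in> \<U> \<Longrightarrow> U \<subseteq> V \<Longrightarrow> V \<in> \<U>"
proof -
  assume a: "uniformity \<U>" "U \<in> \<U>" "U \<subseteq> V"
  have "\<forall>U\<in>\<U>. \<forall>V. U \<subseteq> V \<longrightarrow> V \<in> \<U>" using a(1) by (simp add: uniformity_def)
  then show ?thesis using a(2,3) by blast
qed

lemma unif_int: "uniformity \<U> \<Longrightarrow> U \<in> \<U> \<Longrightarrow> V \<in> \<U> \<Longrightarrow> U \<inter> V \<in> \<U>"
proof -
  assume a: "uniformity \<U>" "U \<in> \<U>" "V \<in> \<U>"
  have "\<forall>U\<in>\<U>. \<forall>V\<in>\<U>. U \<inter> V \<in> \<U>" using a(1) by (simp add: uniformity_def)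
  then show ?thesis using a(2,3) by blast
qed

lemma finite_Inter_in:
  assumes U: "uniformity \<U>" and "finite F" "F \<subseteq> \<U>"
  shows "\<Inter>F \<in> \<U>"
  using assms(2,3)
proof (induction F rule: finite_induct)
  case empty
  from unif_ne[OF U] obtain V where V: "V \<in> \<U>" by blast
  have "UNIV \<in> \<U>" by (rule unif_up[OF U V]) simp
  then show ?case by simp
next
  case (insert x F)
  have "x \<in> \<U>" "\<Inter>F \<in> \<U>" using insert by auto
  then have "x \<inter> \<Inter>F \<in> \<U>" by (rule unif_int[OF U])
  then show ?case by simp
qed

lemma istop:
  assumes U: "uniformity \<U>"
  shows "istopology (free_na_open \<U>)"
  unfolding istopology_def
proof (intro conjI allI impI)
  fix S T assume S: "free_na_open \<U> S" and T: "free_na_open \<U> T"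
  show "free_na_open \<U> (S \<inter> T)"
    unfolding free_na_open_def
  proof
    fix w assume w: "w \<in> S \<inter> T"
    obtain H1 where H1: "is_subgroup H1" "{(x, y). gen x - gen y \<in> H1} \<in> \<U>" "(\<lambda>h. w + h) ` H1 \<subseteq> S"
      using S w unfolding free_na_open_def by blast
    obtain H2 where H2: "is_subgroup H2" "{(x, y). gen x - gen y \<in> H2} \<in> \<U>" "(\<lambda>h. w + h) ` H2 \<subseteq> T"
      using T w unfolding free_na_open_def by blast
    have "{(x, y). gen x - gen y \<in> H1 \<inter> H2} = {(x, y). gen x - gen y \<in> H1} \<inter> {(x, y). gen x - gen y \<in> H2}"
      by auto
    then have "{(x, y). gen x - gen y \<in> H1 \<inter> H2} \<in> \<U>"
      using unif_int[OF U H1(2) H2(2)] by simp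
    moreover have "is_subgroup (H1 \<inter> H2)" using H1(1) H2(1) unfolding is_subgroup_def by auto
    moreover have "(\<lambda>h. w + h) ` (H1 \<inter> H2) \<subseteq> S \<inter> T" using H1(3) H2(3) by auto
    ultimately show "\<exists>H. is_subgroup H \<and> {(x, y). gen x - gen y \<in> H} \<in> \<U> \<and> (\<lambda>h. w + h) ` H \<subseteq> S \<inter> T"
      by blast
  qed
next
  fix K assume K: "\<forall>K\<in>K. free_na_open \<U> K"
  show "free_na_open \<U> (\<Union>K)"
    unfolding free_na_open_def
  proof
    fix w assume "w \<in> \<Union>K"
    then obtain k where "k \<in> K" "w \<in> k" by blast
    then obtain H where "is_subgroup H" "{(x, y). gen x - gen y \<in> H} \<in> \<U>" "(\<lambda>h. w + h) ` H \<subseteq> k"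
      using K unfolding free_na_open_def by blast
    then show "\<exists>H. is_subgroup H \<and> {(x, y). gen x - gen y \<in> H} \<in> \<U> \<and> (\<lambda>h. w + h) ` H \<subseteq> \<Union>K"
      using \<open>k \<in> K\<close> by blast
  qed
qed

lemma univ_open:
  assumes U: "uniformity \<U>"
  shows "free_na_open \<U> UNIV"
proof -
  have "UNIV \<in> \<U>" using finite_Inter_in[OF U, of "{}"] by simp
  moreover have "is_subgroup UNIV" by (simp add: is_subgroup_def)
  ultimately show ?thesis unfolding free_na_open_def by auto
qed

lemma separating_equiv:
  assumes NA: "non_archimedean_uniformity \<U>" and fin: "finite S"
  shows "\<exists>E\<in>\<U>. equiv UNIV E \<and> (\<forall>s\<in>S. \<forall>t\<in>S. (s, t) \<in> E \<longrightarrow> s = t)"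
proof -
  have U: "uniformity \<U>" and I: "\<Inter>\<U> = Id"
    using NA unfolding non_archimedean_uniformity_def hausdorff_uniformity_def by auto
  let ?P = "{p \<in> S \<times> S. fst p \<noteq> snd p}"
  have ex: "\<exists>V. V \<in> \<U> \<and> p \<notin> V" if "p \<in> ?P" for p
    using that I by (cases p) auto
  define V where "V p = (SOME V. V \<in> \<U> \<and> p \<notin> V)" for p
  have V: "V p \<in> \<U> \<and> p \<notin> V p" if "p \<in> ?P" for p
    unfolding V_def using someI_ex[OF ex[OF that]] .
  have "finite ?P" using fin by auto
  then have W: "\<Inter>(V ` ?P) \<in> \<U>" using V by (intro finite_Inter_in[OF U]) auto
  then obtain E where E: "E \<in> \<U>" "equiv UNIV E" "E \<subseteq> \<Inter>(V ` ?P)"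
    using NA unfolding non_archimedean_uniformity_def by blast
  have "(s, t) \<in> E \<Longrightarrow> s = t" if "s \<in> S" "t \<in> S" for s t
  proof (rule ccontr)
    assume "(s,t) \<in> E" "s \<noteq> t"
    then have "(s,t) \<in> ?P" using that by auto
    with V[OF this] E(3) \<open>(s,t) \<in> E\<close> show False by blast
  qed
  with E show ?thesis by blast
qed

lemma int_word_length: "int (word_length w) = (\<Sum>x\<in>Poly_Mapping.keys w. \<bar>Poly_Mapping.lookup w x\<bar>)"
  unfolding word_length_def by (simp add: of_nat_sum)

lemma key_lemma:
  assumes NA: "non_archimedean_uniformity \<U>" and wn: "\<not> word_length w \<le> n"
  shows "\<exists>H. is_subgroup H \<and> {(x, y). gen x - gen y \<in> H} \<in> \<U>
              \<and> (\<lambda>h. w + h) ` H \<subseteq> - {w. word_length w \<le> n}"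
proof -
  have U: "uniformity \<U>"
    using NA unfolding non_archimedean_uniformity_def hausdorff_uniformity_def by auto
  let ?S = "Poly_Mapping.keys w"
  have "\<exists>E\<in>\<U>. equiv UNIV E \<and> (\<forall>s\<in>?S. \<forall>t\<in>?S. (s, t) \<in> E \<longrightarrow> s = t)"
    by (rule separating_equiv[OF NA]) simp
  then obtain E where E: "E \<in> \<U>" "equiv UNIV E" and sep: "\<forall>s\<in>?S. \<forall>t\<in>?S. (s, t) \<in> E \<longrightarrow> s = t"
    by blast
  define H where "H = {v. \<forall>z. csum (E `` {z}) v = 0}"
  have sg: "is_subgroup H" unfolding is_subgroup_def H_def
    by (auto simp: csum_zero csum_minus)
  have "E \<subseteq> {(x, y). gen x - gen y \<in> H}"
  proof safe
    fix x y assume xy: "(x, y) \<in> E"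
    have "(z, x) \<in> E \<longleftrightarrow> (z, y) \<in> E" for z
      using E(2) xy unfolding equiv_def by (meson symE transE)
    then show "gen x - gen y \<in> H" unfolding H_def
      by (auto simp: csum_minus csum_gen)
  qed
  then have ent: "{(x, y). gen x - gen y \<in> H} \<in> \<U>"
    by (rule unif_up[OF U E(1)])
  have wl: "word_length (w + h) > n" if h: "h \<in> H" for h
  proof -
    let ?v = "w + h"
    let ?C = "\<lambda>s. E `` {s}"
    have cs: "csum (?C s) ?v = Poly_Mapping.lookup w s" if s: "s \<in> ?S" for s
    proof -
      have "csum (?C s) h = 0" using h unfolding H_def by auto
      moreover have "?S \<inter> ?C s = {s}"
        using sep s E(2) unfolding equiv_def refl_on_def by auto
      then have "csum (?C s) w = Poly_Mapping.lookup w s" unfolding csum_def by simp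
      ultimately show ?thesis by (simp add: csum_add)
    qed
    have disj: "disjoint_family_on (\<lambda>s. Poly_Mapping.keys ?v \<inter> ?C s) ?S"
      unfolding disjoint_family_on_def
    proof (intro ballI impI)
      fix s t assume "s \<in> ?S" "t \<in> ?S" "s \<noteq> t"
      then have "(s,t) \<notin> E" using sep by blast
      then show "(Poly_Mapping.keys ?v \<inter> ?C s) \<inter> (Poly_Mapping.keys ?v \<inter> ?C t) = {}"
        using E(2) unfolding equiv_def by (auto dest: symD transD)
    qed
    have "int (word_length w) = (\<Sum>s\<in>?S. \<bar>Poly_Mapping.lookup w s\<bar>)"
      by (rule int_word_length)
    also have "\<dots> = (\<Sum>s\<in>?S. \<bar>csum (?C s) ?v\<bar>)" using cs by simp
    also have "\<dots> \<le> (\<Sum>s\<in>?S. \<Sum>x\<in>Poly_Mapping.keys ?v \<inter> ?C s. \<bar>Poly_Mapping.lookup ?v x\<bar>)"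
      unfolding csum_def by (intro sum_mono sum_abs)
    also have "\<dots> = (\<Sum>x\<in>(\<Union>s\<in>?S. Poly_Mapping.keys ?v \<inter> ?C s). \<bar>Poly_Mapping.lookup ?v x\<bar>)"
      by (rule sum.UNION_disjoint_family[symmetric]) (use disj in auto)
    also have "\<dots> \<le> (\<Sum>x\<in>Poly_Mapping.keys ?v. \<bar>Poly_Mapping.lookup ?v x\<bar>)"
      by (rule sum_mono2) auto
    also have "\<dots> = int (word_length ?v)" by (rule int_word_length[symmetric])
    finally have "word_length w \<le> word_length ?v" by simp
    then show ?thesis using wn by simp
  qed
  have "(\<lambda>h. w + h) ` H \<subseteq> - {w. word_length w \<le> n}"
  proof
    fix v assume "v \<in> (\<lambda>h. w + h) ` H"
    then obtain h where "h \<in> H" "v = w + h" by blast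
    with wl[OF this(1)] show "v \<in> - {w. word_length w \<le> n}" by simp
  qed
  with sg ent show ?thesis by blast
qed

theorem lemma4p19:
  fixes \<U> :: "('a \<times> 'a) set set" and n :: nat
  assumes "non_archimedean_uniformity \<U>"
  shows "closedin (A_NA_topology \<U>) {w. word_length w \<le> n}"
proof -
  have U: "uniformity \<U>"
    using assms unfolding non_archimedean_uniformity_def hausdorff_uniformity_def by auto
  have op: "openin (A_NA_topology \<U>) = free_na_open \<U>"
    unfolding A_NA_topology_def using istop[OF U] by simp
  have ts: "topspace (A_NA_topology \<U>) = UNIV"
    unfolding topspace_def op using univ_open[OF U] by auto
  have "free_na_open \<U> (- {w. word_length w \<le> n})"
    unfolding free_na_open_def using key_lemma[OF assms] by auto
  then show ?thesis unfolding closedin_def ts op by (simp add: Compl_eq_Diff_UNIV)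
qed

end
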